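(* Let $A$ be a connected monounary algebra. Then there exists $B\in\mathbf R(A)\cap\mathcal U^\bigstar_c$ with $\mathbf V(A)=\mathbf V(B)$.
   Context: A monounary algebra is a pair $(A,f)$ with $A$ a nonempty set and $f:A\to A$; a partial monounary algebra allows $f$ to be partial. Direct products are coordinatewise. It is connected if for all $x,y$ there are $m,n\ge0$ with $f^m(x)=f^n(y)$. A retract of $A$ is a nonempty subalgebra $M$ such that there is an endomorphism $h:A\to M$ with $h|_M=\mathrm{id}$; $\mathbf R(A)$ is the class of algebras isomorphic to a retract of $A$. A retract variety is a class closed under isomorphisms, retracts and direct products; $\mathbf V(\mathcal K)$ is the smallest retract variety containing $\mathcal K$. For $x\in A$: $f^{-1}(x)=\{y:f(y)=x\}$, $f^{-n}(x)=\bigcup_{z\in f^{-(n-1)}(x)}f^{-1}(z)$, $P(x)=\{x\}\cup\bigcup_{n\ge1}f^{-n}(x)$, regarded as a partial monounary algebra with $f$ restricted to those $y\in P(x)$ with $f(y)\in P(x)$. Condition ($\bigstar$) on $(A,f)$: whenever $x_1,x_2,x_3\in A$ with $f(x_1)=f(x_2)=f(x_3)$ and $P(x_1),P(x_2),P(x_3)$ pairwise isomorphic, then $|\{x_1,x_2,x_3\}|\le2$. $\mathcal U^\bigstar_c$ is the class of connected monounary algebras satisfying ($\bigstar$). *)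

theory Defs
  imports "HOL-Library.FuncSet"
begin

text \<open>A monounary algebra is represented by a carrier set A and a map f
  (only its values on A matter).\<close>

definition mono_alg :: "'a set \<Rightarrow> ('a \<Rightarrow> 'a) \<Rightarrow> bool" where
  "mono_alg A f \<longleftrightarrow> A \<noteq> {} \<and> (\<forall>x\<in>A. f x \<in> A)"

definition mhom :: "'a set \<Rightarrow> ('a \<Rightarrow> 'a) \<Rightarrow> 'b set \<Rightarrow> ('b \<Rightarrow> 'b) \<Rightarrow> ('a \<Rightarrow> 'b) \<Rightarrow> bool" where
  "mhom A f B g h \<longleftrightarrow> (\<forall>x\<in>A. h x \<in> B) \<and> (\<forall>x\<in>A. h (f x) = g (h x))"

definition miso :: "'a set \<Rightarrow> ('a \<Rightarrow> 'a) \<Rightarrow> 'b set \<Rightarrow> ('b \<Rightarrow> 'b) \<Rightarrow> ('a \<Rightarrow> 'b) \<Rightarrow> bool" where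
  "miso A f B g h \<longleftrightarrow> mhom A f B g h \<and> bij_betw h A B"

definition is_retract :: "'a set \<Rightarrow> ('a \<Rightarrow> 'a) \<Rightarrow> 'a set \<Rightarrow> bool" where
  "is_retract A f M \<longleftrightarrow> M \<noteq> {} \<and> M \<subseteq> A \<and> (\<forall>x\<in>M. f x \<in> M) \<and>
     (\<exists>h. mhom A f M f h \<and> (\<forall>x\<in>M. h x = x))"

definition in_R :: "'a set \<Rightarrow> ('a \<Rightarrow> 'a) \<Rightarrow> 'b set \<Rightarrow> ('b \<Rightarrow> 'b) \<Rightarrow> bool" where
  "in_R A f C g \<longleftrightarrow> (\<exists>M h. is_retract A f M \<and> miso C g M f h)"

definition pow_fun :: "'i set \<Rightarrow> ('b \<Rightarrow> 'b) \<Rightarrow> ('i \<Rightarrow> 'b) \<Rightarrow> ('i \<Rightarrow> 'b)" where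
  "pow_fun I g = (\<lambda>\<phi>. restrict (\<lambda>i. g (\<phi> i)) I)"

text \<open>(C,g) belongs to V(B,f), the retract variety generated by (B,f), i.e. to
  I R P {(B,f)}: it is isomorphic to a retract of a direct power (B,f)^I.
  The index set is taken inside the type of maps C -> B, which is large enough
  (the set of homomorphisms C -> B always suffices as index set).\<close>
definition in_V :: "'b set \<Rightarrow> ('b \<Rightarrow> 'b) \<Rightarrow> 'a set \<Rightarrow> ('a \<Rightarrow> 'a) \<Rightarrow> bool" where
  "in_V B f C g \<longleftrightarrow> (\<exists>I :: ('a \<Rightarrow> 'b) set. in_R (Pi\<^sub>E I (\<lambda>_. B)) (pow_fun I f) C g)"

definition same_V :: "'a set \<Rightarrow> ('a \<Rightarrow> 'a) \<Rightarrow> 'b set \<Rightarrow> ('b \<Rightarrow> 'b) \<Rightarrow> bool" where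
  "same_V A f B g \<longleftrightarrow> in_V B g A f \<and> in_V A f B g"

definition connected_alg :: "'a set \<Rightarrow> ('a \<Rightarrow> 'a) \<Rightarrow> bool" where
  "connected_alg A f \<longleftrightarrow> (\<forall>x\<in>A. \<forall>y\<in>A. \<exists>m n. (f ^^ m) x = (f ^^ n) y)"

definition Pset :: "'a set \<Rightarrow> ('a \<Rightarrow> 'a) \<Rightarrow> 'a \<Rightarrow> 'a set" where
  "Pset A f x = {y\<in>A. \<exists>n. (f ^^ n) y = x}"

definition partial_iso :: "'a set \<Rightarrow> 'a set \<Rightarrow> ('a \<Rightarrow> 'a) \<Rightarrow> bool" where
  "partial_iso P Q f \<longleftrightarrow> (\<exists>h. bij_betw h P Q \<and>
     (\<forall>y\<in>P. (f y \<in> P \<longleftrightarrow> f (h y) \<in> Q) \<and> (f y \<in> P \<longrightarrow> h (f y) = f (h y))))"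

definition star_cond :: "'a set \<Rightarrow> ('a \<Rightarrow> 'a) \<Rightarrow> bool" where
  "star_cond A f \<longleftrightarrow> (\<forall>x1\<in>A. \<forall>x2\<in>A. \<forall>x3\<in>A.
     f x1 = f x2 \<and> f x2 = f x3 \<and>
     partial_iso (Pset A f x1) (Pset A f x2) f \<and>
     partial_iso (Pset A f x1) (Pset A f x3) f \<and>
     partial_iso (Pset A f x2) (Pset A f x3) f
     \<longrightarrow> card {x1, x2, x3} \<le> 2)"

definition in_Ustar_c :: "'a set \<Rightarrow> ('a \<Rightarrow> 'a) \<Rightarrow> bool" where
  "in_Ustar_c A f \<longleftrightarrow> mono_alg A f \<and> connected_alg A f \<and> star_cond A f"

end

theory Submission
  imports Defs
begin

definition cnt2 :: "'a set \<Rightarrow> nat" where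
  "cnt2 X = (if X = {} then 0 else if (\<exists>a\<in>X. \<exists>b\<in>X. a \<noteq> b) then 2 else 1)"

lemma cnt2_eqI:
  assumes "X = {} \<longleftrightarrow> Y = {}" and "(\<exists>a\<in>X. \<exists>b\<in>X. a \<noteq> b) \<longleftrightarrow> (\<exists>a\<in>Y. \<exists>b\<in>Y. a \<noteq> b)"
  shows "cnt2 X = cnt2 Y"
  using assms unfolding cnt2_def by auto

lemma cnt2_eqD:
  assumes "cnt2 X = cnt2 Y"
  shows "(X = {} \<longleftrightarrow> Y = {}) \<and> ((\<exists>a\<in>X. \<exists>b\<in>X. a \<noteq> b) \<longleftrightarrow> (\<exists>a\<in>Y. \<exists>b\<in>Y. a \<noteq> b))"
  using assms unfolding cnt2_def by (auto split: if_splits)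

lemma cnt2_bij:
  assumes "bij_betw h X Y" shows "cnt2 X = cnt2 Y"
proof (rule cnt2_eqI)
  show "X = {} \<longleftrightarrow> Y = {}" using assms by (auto simp: bij_betw_def)
  show "(\<exists>a\<in>X. \<exists>b\<in>X. a \<noteq> b) \<longleftrightarrow> (\<exists>a\<in>Y. \<exists>b\<in>Y. a \<noteq> b)"
  proof
    assume "\<exists>a\<in>X. \<exists>b\<in>X. a \<noteq> b"
    then obtain a b where "a\<in>X" "b\<in>X" "a\<noteq>b" by blast
    then show "\<exists>a\<in>Y. \<exists>b\<in>Y. a \<noteq> b" using assms
      by (metis bij_betw_apply bij_betw_inv_into_left)
  next
    assume "\<exists>a\<in>Y. \<exists>b\<in>Y. a \<noteq> b"
    then obtain a b where "a\<in>Y" "b\<in>Y" "a\<noteq>b" by blast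
    then show "\<exists>a\<in>X. \<exists>b\<in>X. a \<noteq> b" using assms
      by (metis bij_betw_def imageE)
  qed
qed

lemma cnt2_union:
  assumes E: "equiv A E" and F: "equiv A F" and EF: "E \<subseteq> F"
    and XA: "X \<subseteq> A" and YA: "Y \<subseteq> A"
    and h: "\<And>z. z \<in> A \<Longrightarrow> cnt2 (X \<inter> E``{z}) = cnt2 (Y \<inter> E``{z})"
  shows "cnt2 (X \<inter> F``{z}) = cnt2 (Y \<inter> F``{z})"
proof -
  have sub: "E``{w} \<subseteq> F``{z}" if "w \<in> F``{z}" for w
  proof
    fix v assume "v \<in> E``{w}"
    then have "(w,v) \<in> F" using EF by auto
    with that show "v \<in> F``{z}" using F unfolding equiv_def trans_def by auto
  qed
  have one: "X \<inter> F``{z} \<noteq> {}" if "Y \<inter> F``{z} \<noteq> {}" "\<And>w. w \<in> A \<Longrightarrow> cnt2 (Y \<inter> E``{w}) = cnt2 (X \<inter> E``{w})"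
    and "X \<subseteq> A" "Y \<subseteq> A" for X Y
  proof -
    from that obtain w where w: "w \<in> Y" "w \<in> F``{z}" by auto
    have wA: "w \<in> A" using w that(4) by auto
    have "w \<in> E``{w}" using E wA unfolding equiv_def refl_on_def by auto
    then have "Y \<inter> E``{w} \<noteq> {}" using w by auto
    then have "X \<inter> E``{w} \<noteq> {}" using cnt2_eqD[OF that(2)[OF wA]] by auto
    then show ?thesis using sub[OF w(2)] by auto
  qed
  have two: "\<exists>a\<in>X \<inter> F``{z}. \<exists>b\<in>X \<inter> F``{z}. a \<noteq> b"
    if "\<exists>a\<in>Y \<inter> F``{z}. \<exists>b\<in>Y \<inter> F``{z}. a \<noteq> b" "\<And>w. w \<in> A \<Longrightarrow> cnt2 (Y \<inter> E``{w}) = cnt2 (X \<inter> E``{w})"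
    and "X \<subseteq> A" "Y \<subseteq> A" for X Y
  proof -
    note hh = that(2) and YsA = that(4)
    from that(1) obtain a b where ab: "a \<in> Y" "b \<in> Y" "a \<in> F``{z}" "b \<in> F``{z}" "a \<noteq> b" by auto
    have aA: "a \<in> A" and bA: "b \<in> A" using ab YsA by auto
    have aa: "a \<in> E``{a}" using E aA unfolding equiv_def refl_on_def by auto
    have bb: "b \<in> E``{b}" using E bA unfolding equiv_def refl_on_def by auto
    show ?thesis
    proof (cases "(a,b) \<in> E")
      case True
      then have "b \<in> E``{a}" by auto
      then have "\<exists>x\<in>Y \<inter> E``{a}. \<exists>y\<in>Y \<inter> E``{a}. x \<noteq> y" using aa ab by blast
      then have "\<exists>x\<in>X \<inter> E``{a}. \<exists>y\<in>X \<inter> E``{a}. x \<noteq> y" using cnt2_eqD[OF hh[OF aA]] by blast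
      then show ?thesis using sub[OF ab(3)] by blast
    next
      case False
      have "Y \<inter> E``{a} \<noteq> {}" using aa ab by auto
      then obtain a' where a': "a' \<in> X" "a' \<in> E``{a}" using cnt2_eqD[OF hh[OF aA]] by blast
      have "Y \<inter> E``{b} \<noteq> {}" using bb ab by auto
      then obtain b' where b': "b' \<in> X" "b' \<in> E``{b}" using cnt2_eqD[OF hh[OF bA]] by blast
      have "a' \<noteq> b'"
      proof
        assume "a' = b'"
        then have "(a,a') \<in> E" "(b,a') \<in> E" using a' b' by auto
        then have "(a,b) \<in> E" using E unfolding equiv_def sym_def trans_def by blast
        with False show False by simp
      qed
      then show ?thesis using a' b' sub[OF ab(3)] sub[OF ab(4)] by blast
    qed
  qed
  have h': "\<And>w. w \<in> A \<Longrightarrow> cnt2 (Y \<inter> E``{w}) = cnt2 (X \<inter> E``{w})" using h by metis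
  show ?thesis
    apply (rule cnt2_eqI)
    using one[OF _ h YA XA] one[OF _ h' XA YA] two[OF _ h YA XA] two[OF _ h' XA YA]
    by blast+
qed


lemma funpow_add_app: "(f ^^ (m + n)) x = (f ^^ m) ((f ^^ n) x)"
  by (simp add: funpow_add)

lemma funpow_Suc_app: "(f ^^ Suc n) x = (f ^^ n) (f x)"
  by (metis comp_apply funpow_Suc_right)

locale MA =
  fixes A :: "'a set" and f :: "'a \<Rightarrow> 'a"
  assumes closed: "x \<in> A \<Longrightarrow> f x \<in> A"
    and conn: "x \<in> A \<Longrightarrow> y \<in> A \<Longrightarrow> \<exists>m n. (f ^^ m) x = (f ^^ n) y"
    and ne: "A \<noteq> {}"
begin

lemma iter_closed: "x \<in> A \<Longrightarrow> (f ^^ n) x \<in> A"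
  by (induction n) (auto simp: closed)

definition Cyc where "Cyc = {x\<in>A. \<exists>n>0. (f ^^ n) x = x}"

lemma Cyc_A: "x \<in> Cyc \<Longrightarrow> x \<in> A" unfolding Cyc_def by auto

lemma Cyc_f: assumes "x \<in> Cyc" shows "f x \<in> Cyc"
proof -
  from assms obtain n where n: "n > 0" "(f ^^ n) x = x" "x \<in> A" unfolding Cyc_def by auto
  have "(f ^^ n) (f x) = f ((f ^^ n) x)" by (simp add: funpow_swap1)
  then show ?thesis using n closed unfolding Cyc_def by auto
qed

lemma Cyc_iter: "x \<in> Cyc \<Longrightarrow> (f ^^ k) x \<in> Cyc"
  by (induction k) (auto simp: Cyc_f)

lemma noncyc_child: "w \<in> A \<Longrightarrow> f w \<notin> Cyc \<Longrightarrow> w \<notin> Cyc"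
  using Cyc_f by blast

lemma cyc_pow: "(f ^^ p) x = x \<Longrightarrow> (f ^^ (p * k)) x = x"
proof (induction k)
  case 0 then show ?case by simp
next
  case (Suc k)
  have "(f ^^ (p * Suc k)) x = (f ^^ p) ((f ^^ (p * k)) x)" by (simp add: funpow_add_app[symmetric] add.commute)
  then show ?case using Suc by simp
qed

lemma eq_iter_Cyc:
  assumes "x \<in> A" "i < j" "(f ^^ i) x = (f ^^ j) x"
  shows "(f ^^ i) x \<in> Cyc"
proof -
  have "(f ^^ (j - i)) ((f ^^ i) x) = (f ^^ j) x" using assms(2) by (simp add: funpow_add_app[symmetric])
  then show ?thesis using assms iter_closed unfolding Cyc_def by (auto intro!: exI[of _ "j-i"])
qed

lemma cyc_pred_unique:
  assumes "x \<in> Cyc" "y \<in> Cyc" "f x = f y" shows "x = y"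
proof -
  obtain n where n: "n > 0" "(f ^^ n) x = x" using assms(1) unfolding Cyc_def by auto
  obtain m where m: "m > 0" "(f ^^ m) y = y" using assms(2) unfolding Cyc_def by auto
  have x: "(f ^^ (n*m)) x = x" using cyc_pow n by blast
  have y: "(f ^^ (m*n)) y = y" using cyc_pow m by blast
  obtain k where k: "n * m = Suc k" using n m by (metis gr0_implies_Suc nat_0_less_mult_iff)
  have "(f ^^ (n*m)) x = (f ^^ (n*m)) y" unfolding k funpow_Suc_app using assms(3) by simp
  then show ?thesis using x y by (simp add: mult.commute)
qed

lemma Cyc_reach:
  assumes "x \<in> Cyc" "y \<in> A" shows "\<exists>n. (f ^^ n) y = x"
proof -
  obtain p where p: "p > 0" "(f ^^ p) x = x" using assms(1) unfolding Cyc_def by auto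
  obtain m n where mn: "(f ^^ m) y = (f ^^ n) x" using conn[OF assms(2) Cyc_A[OF assms(1)]] by auto
  have "(f ^^ ((p - 1) * n + m)) y = (f ^^ ((p - 1) * n)) ((f ^^ n) x)" by (simp add: funpow_add_app mn)
  also have "\<dots> = (f ^^ ((p-1) * n + n)) x" by (simp add: funpow_add_app)
  also have "(p-1)*n + n = p * n" using p by (cases p) auto
  also have "(f ^^ (p*n)) x = x" using cyc_pow p by blast
  finally show ?thesis by blast
qed

definition ch where "ch c = {w\<in>A. f w = c}"

definition bal where "bal E x y \<longleftrightarrow> (\<forall>z\<in>A. cnt2 (ch x \<inter> E``{z}) = cnt2 (ch y \<inter> E``{z}))"

definition stable where "stable E \<longleftrightarrow> equiv A E \<and> (\<forall>(x,y)\<in>E. bal E x y)"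

definition sim where "sim = trancl (\<Union>{E. stable E})"

lemma stable_Id: "stable (Id_on A)"
proof -
  have "equiv A (Id_on A)" unfolding equiv_def refl_on_def sym_def trans_def by auto
  moreover have "\<forall>(x,y)\<in>Id_on A. bal (Id_on A) x y" unfolding bal_def by auto
  ultimately show ?thesis unfolding stable_def by blast
qed

lemma stable_sub: "stable E \<Longrightarrow> E \<subseteq> A \<times> A"
  unfolding stable_def equiv_def refl_on_def by auto

lemma sim_sub: "sim \<subseteq> A \<times> A"
proof -
  have "\<Union>{E. stable E} \<subseteq> A \<times> A" using stable_sub by blast
  then show ?thesis unfolding sim_def by (metis trancl_subset_Sigma)
qed

lemma sim_equiv: "equiv A sim"
proof -
  let ?U = "\<Union>{E. stable E}"
  have "sym ?U" unfolding sym_def stable_def equiv_def sym_def by blast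
  then have s: "sym sim" unfolding sim_def by (rule sym_trancl)
  have r: "Id_on A \<subseteq> sim" using stable_Id unfolding sim_def by blast
  have t: "trans sim" unfolding sim_def by (rule trans_trancl)
  have "refl_on A sim" unfolding refl_on_def using r sim_sub by auto
  then show ?thesis unfolding equiv_def using s t sim_sub by blast
qed

lemma sim_refl: "x \<in> A \<Longrightarrow> (x,x) \<in> sim"
  using sim_equiv unfolding equiv_def refl_on_def by auto
lemma sim_sym: "(x,y) \<in> sim \<Longrightarrow> (y,x) \<in> sim"
  using sim_equiv unfolding equiv_def sym_def by auto
lemma sim_trans: "(x,y) \<in> sim \<Longrightarrow> (y,z) \<in> sim \<Longrightarrow> (x,z) \<in> sim"
  using sim_equiv unfolding equiv_def trans_def by blast
lemma sim_A: "(x,y) \<in> sim \<Longrightarrow> x \<in> A \<and> y \<in> A"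
  using sim_sub by auto

lemma ch_A: "ch x \<subseteq> A" unfolding ch_def by auto

lemma bal_mono:
  assumes "equiv A E" "equiv A F" "E \<subseteq> F" "bal E x y" shows "bal F x y"
  using assms cnt2_union[OF assms(1,2,3) ch_A ch_A] unfolding bal_def by blast

lemma stable_le_sim: "stable E \<Longrightarrow> E \<subseteq> sim"
  unfolding sim_def by (blast intro: r_into_trancl')

lemma sim_bal: assumes "(x,y) \<in> sim" shows "bal sim x y"
proof -
  have "(x,y) \<in> trancl (\<Union>{E. stable E})" using assms unfolding sim_def .
  then show ?thesis
  proof (induction rule: trancl_induct)
    case (base y)
    then obtain E where "stable E" "(x,y) \<in> E" by auto
    then show ?case using bal_mono[of E sim] stable_le_sim sim_equiv unfolding stable_def by blast
  next
    case (step y z)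
    then obtain E where "stable E" "(y,z) \<in> E" by auto
    then have "bal sim y z" using bal_mono[of E sim] stable_le_sim sim_equiv unfolding stable_def by blast
    then show ?case using step(3) unfolding bal_def by simp
  qed
qed

lemma stable_sim: "stable E \<Longrightarrow> (x,y) \<in> E \<Longrightarrow> (x,y) \<in> sim"
  using stable_le_sim by blast

end

context MA begin

definition x0 where "x0 = (SOME x. x \<in> A)"
lemma x0_A: "x0 \<in> A" unfolding x0_def using ne by (simp add: some_in_eq)

definition spine where "spine = range (\<lambda>k. (f^^k) x0)"
definition S where "S c z = {w \<in> A. f w = c \<and> (w,z) \<in> sim \<and> w \<notin> Cyc}"
definition Tspec where "Tspec X T \<longleftrightarrow> T \<subseteq> X \<and> finite T \<and> card T \<le> 2 \<and>
   (finite X \<and> card X \<le> 2 \<longrightarrow> T = X) \<and> (\<not>(finite X \<and> card X \<le> 2) \<longrightarrow> card T = 2) \<and>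
   (\<forall>w\<in>X. w \<in> spine \<longrightarrow> w \<in> T)"
definition Tsel where "Tsel X = (SOME T. Tspec X T)"
definition T where "T c z = Tsel (S c z)"
definition kept where "kept w \<longleftrightarrow> w \<in> Cyc \<or> w \<in> T (f w) w"
definition B where "B = {x\<in>A. \<forall>k. kept ((f^^k) x)}"
definition Bch where "Bch y = {w\<in>B. f w = y}"

lemma not_small_two:
  assumes "\<not>(finite X \<and> card X \<le> 2)" "a \<in> X"
  shows "\<exists>b\<in>X. b \<noteq> a"
proof (rule ccontr)
  assume "\<not> ?thesis"
  then have "X \<subseteq> {a}" by auto
  then have "finite X" "card X \<le> card {a}" using finite_subset card_mono by (blast, blast)
  then have "finite X \<and> card X \<le> 2" by simp
  with assms show False by simp
qed

lemma Tspec_exists: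
  assumes u: "\<forall>w\<in>X. \<forall>w'\<in>X. w \<in> spine \<longrightarrow> w' \<in> spine \<longrightarrow> w = w'"
  shows "\<exists>T. Tspec X T"
proof (cases "finite X \<and> card X \<le> 2")
  case True
  then show ?thesis unfolding Tspec_def by (intro exI[of _ X]) auto
next
  case False
  then have "X \<noteq> {}" by (metis card.empty finite.emptyI zero_le)
  show ?thesis
  proof (cases "\<exists>s\<in>X. s \<in> spine")
    case True
    then obtain s where s: "s \<in> X" "s \<in> spine" by auto
    obtain w where w: "w \<in> X" "w \<noteq> s" using not_small_two[OF False s(1)] by auto
    have "Tspec X {s,w}" unfolding Tspec_def using s w False u by auto
    then show ?thesis by blast
  next
    case nos: False
    obtain a where a: "a \<in> X" using \<open>X \<noteq> {}\<close> by auto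
    obtain w where w: "w \<in> X" "w \<noteq> a" using not_small_two[OF False a] by auto
    have "Tspec X {a,w}" unfolding Tspec_def using a w False nos by auto
    then show ?thesis by blast
  qed
qed

lemma S_spine_unique:
  assumes "w \<in> S c z" "w' \<in> S c z" "w \<in> spine" "w' \<in> spine" shows "w = w'"
proof -
  obtain k j where k: "w = (f^^k) x0" and j: "w' = (f^^j) x0" using assms(3,4) unfolding spine_def by auto
  have fw: "f w = c" "f w' = c" and nc: "w \<notin> Cyc" "w' \<notin> Cyc" using assms(1,2) unfolding S_def by auto
  have e: "(f^^Suc k) x0 = (f^^Suc j) x0" using fw k j by simp
  show ?thesis
  proof (cases k j rule: linorder_cases)
    case less
    then have "(f^^Suc k) x0 \<in> Cyc" using eq_iter_Cyc[OF x0_A _ e] by simp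
    then have "(f ^^ (j - k - 1)) ((f^^Suc k) x0) \<in> Cyc" by (rule Cyc_iter)
    moreover have "(f ^^ (j - k - 1)) ((f^^Suc k) x0) = (f^^((j-k-1) + Suc k)) x0" by (simp only: funpow_add_app)
    moreover have "(j-k-1) + Suc k = j" using less by simp
    ultimately show ?thesis using nc j by simp
  next
    case greater
    then have "(f^^Suc j) x0 \<in> Cyc" using eq_iter_Cyc[OF x0_A _ e[symmetric]] by simp
    then have "(f ^^ (k - j - 1)) ((f^^Suc j) x0) \<in> Cyc" by (rule Cyc_iter)
    moreover have "(f ^^ (k - j - 1)) ((f^^Suc j) x0) = (f^^((k-j-1) + Suc j)) x0" by (simp only: funpow_add_app)
    moreover have "(k-j-1) + Suc j = k" using greater by simp
    ultimately show ?thesis using nc k by simp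
  qed (use k j in simp)
qed

lemma Tspec_T: "Tspec (S c z) (T c z)"
proof -
  have "\<exists>T. Tspec (S c z) T" by (rule Tspec_exists) (use S_spine_unique in blast)
  then show ?thesis unfolding T_def Tsel_def by (rule someI_ex)
qed

lemma S_cong: "(z,z') \<in> sim \<Longrightarrow> S c z = S c z'"
  unfolding S_def using sim_trans sim_sym by blast

lemma T_cong: "(z,z') \<in> sim \<Longrightarrow> T c z = T c z'"
  unfolding T_def using S_cong by simp

lemma T_S: "T c z \<subseteq> S c z" using Tspec_T unfolding Tspec_def by blast

lemma T_props: "w \<in> T c z \<Longrightarrow> w \<in> A \<and> f w = c \<and> (w,z) \<in> sim \<and> w \<notin> Cyc"
  using T_S unfolding S_def by blast

lemma T_fin: "finite (T c z) \<and> card (T c z) \<le> 2"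
  using Tspec_T unfolding Tspec_def by blast

lemma cnt2_T: "cnt2 (T c z) = cnt2 (S c z)"
proof (cases "finite (S c z) \<and> card (S c z) \<le> 2")
  case True
  then show ?thesis using Tspec_T unfolding Tspec_def by simp
next
  case False
  then have c2: "card (T c z) = 2" using Tspec_T unfolding Tspec_def by blast
  then obtain a b where "T c z = {a,b}" "a \<noteq> b" by (meson card_2_iff)
  then have t: "cnt2 (T c z) = 2" unfolding cnt2_def by auto
  have "S c z \<noteq> {}" using False by (metis card.empty finite.emptyI zero_le)
  then obtain a where "a \<in> S c z" by auto
  then obtain b where "b \<in> S c z" "b \<noteq> a" using not_small_two[OF False] by blast
  then have "cnt2 (S c z) = 2" using \<open>a \<in> S c z\<close> unfolding cnt2_def by auto
  then show ?thesis using t by simp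
qed

lemma T_spine: "w \<in> S c z \<Longrightarrow> w \<in> spine \<Longrightarrow> w \<in> T c z"
  using Tspec_T unfolding Tspec_def by blast

lemma B_A: "B \<subseteq> A" unfolding B_def by auto

lemma B_closed: "x \<in> B \<Longrightarrow> f x \<in> B"
  unfolding B_def using closed by (auto simp: funpow_Suc_app[symmetric] simp del: funpow.simps)

lemma B_kept: "x \<in> B \<Longrightarrow> kept x"
  unfolding B_def by (metis (mono_tags, lifting) funpow_0 mem_Collect_eq)

lemma kept_B: assumes "w \<in> A" "f w \<in> B" "kept w" shows "w \<in> B"
proof -
  have "kept ((f^^k) w)" for k
  proof (cases k)
    case 0 then show ?thesis using assms by simp
  next
    case (Suc j)
    then show ?thesis using assms(2) unfolding B_def Suc funpow_Suc_app by blast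
  qed
  then show ?thesis unfolding B_def using assms by auto
qed

lemma Cyc_B: "x \<in> Cyc \<Longrightarrow> x \<in> B"
  unfolding B_def kept_def using Cyc_iter Cyc_A by blast

lemma x0_B: "x0 \<in> B"
proof -
  have "kept ((f^^k) x0)" for k
  proof (cases "(f^^k) x0 \<in> Cyc")
    case True then show ?thesis unfolding kept_def by simp
  next
    case False
    have "(f^^k) x0 \<in> S (f ((f^^k) x0)) ((f^^k) x0)"
      unfolding S_def using False iter_closed[OF x0_A] sim_refl by auto
    moreover have "(f^^k) x0 \<in> spine" unfolding spine_def by auto
    ultimately show ?thesis unfolding kept_def using T_spine by blast
  qed
  then show ?thesis unfolding B_def using x0_A by auto
qed

lemma B_ne: "B \<noteq> {}" using x0_B by auto

lemma T_B: assumes "c \<in> B" "w \<in> T c z" shows "w \<in> B"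
proof -
  have w: "w \<in> A" "f w = c" "(w,z) \<in> sim" using T_props[OF assms(2)] by auto
  have "T (f w) w = T c z" using w T_cong[of w z] by simp
  then have "kept w" unfolding kept_def using assms(2) by simp
  then show ?thesis using kept_B w assms(1) by simp
qed

lemma B_child_T: assumes "w \<in> B" "w \<notin> Cyc" shows "w \<in> T (f w) w"
  using B_kept[OF assms(1)] assms(2) unfolding kept_def by simp

lemma ch_noncyc: "w \<in> ch y \<Longrightarrow> y \<notin> Cyc \<Longrightarrow> w \<notin> Cyc"
  unfolding ch_def using Cyc_f by blast

lemma profile_S: "y \<notin> Cyc \<Longrightarrow> ch y \<inter> sim``{z} = S y z"
  unfolding S_def ch_def using Cyc_f sim_sym by blast

lemma profile_T: assumes "y \<in> B" "y \<notin> Cyc" shows "Bch y \<inter> sim``{z} = T y z"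
proof
  show "Bch y \<inter> sim``{z} \<subseteq> T y z"
  proof
    fix w assume w: "w \<in> Bch y \<inter> sim``{z}"
    then have "w \<in> B" "f w = y" "(w,z) \<in> sim" unfolding Bch_def using sim_sym by auto
    moreover then have "w \<notin> Cyc" using assms(2) Cyc_f by blast
    ultimately show "w \<in> T y z" using B_child_T T_cong by metis
  qed
  show "T y z \<subseteq> Bch y \<inter> sim``{z}"
    using T_B[OF assms(1)] T_props sim_sym unfolding Bch_def by blast
qed

lemma Bch_A: "Bch y \<subseteq> A" unfolding Bch_def using B_A by auto

lemma profile_cnt: assumes "y \<in> B" "y \<notin> Cyc" "z \<in> A"
  shows "cnt2 (ch y \<inter> sim``{z}) = cnt2 (Bch y \<inter> sim``{z})"
  using profile_S[OF assms(2)] profile_T[OF assms(1,2)] cnt2_T by simp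

end

lemma bij_betw_Int:
  assumes "bij_betw h X Y" "\<forall>w\<in>X. w \<in> C \<longleftrightarrow> h w \<in> C"
  shows "bij_betw h (X \<inter> C) (Y \<inter> C)"
proof -
  have "inj_on h (X \<inter> C)" using assms(1) unfolding bij_betw_def by (meson inf_le1 inj_on_subset)
  moreover have "h ` (X \<inter> C) = Y \<inter> C" using assms unfolding bij_betw_def by auto
  ultimately show ?thesis unfolding bij_betw_def by blast
qed

context MA begin

lemma Pset_B: "y \<in> Pset B f x \<Longrightarrow> y \<in> B \<and> (\<exists>n. (f^^n) y = x)"
  unfolding Pset_def by auto

lemma Pset_self: "x \<in> B \<Longrightarrow> x \<in> Pset B f x"
  unfolding Pset_def by (auto intro: exI[of _ 0])

lemma Pset_noncyc: "x \<notin> Cyc \<Longrightarrow> y \<in> Pset B f x \<Longrightarrow> y \<notin> Cyc"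
  using Pset_B Cyc_iter by blast

lemma Pset_top: assumes "y \<in> Pset B f x" "f y \<notin> Pset B f x" shows "y = x"
proof -
  obtain n where n: "(f^^n) y = x" "y \<in> B" using Pset_B[OF assms(1)] by auto
  show ?thesis
  proof (cases n)
    case 0 then show ?thesis using n by simp
  next
    case (Suc m)
    then have "(f^^m) (f y) = x" using n by (simp add: funpow_Suc_app[symmetric] del: funpow.simps)
    then have "f y \<in> Pset B f x" unfolding Pset_def using B_closed n(2) by auto
    with assms(2) show ?thesis by simp
  qed
qed

lemma Pset_f_out: assumes "x \<in> B" "x \<notin> Cyc" shows "f x \<notin> Pset B f x"
proof
  assume "f x \<in> Pset B f x"
  then obtain n where "(f^^n) (f x) = x" using Pset_B by blast
  then have "(f^^Suc n) x = x" by (simp add: funpow_Suc_app del: funpow.simps)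
  then have "x \<in> Cyc" unfolding Cyc_def using assms B_A by blast
  with assms show False by simp
qed

lemma Pset_child: assumes "y \<in> Pset B f x" "w \<in> Bch y" shows "w \<in> Pset B f x"
proof -
  obtain n where n: "(f^^n) y = x" using Pset_B[OF assms(1)] by auto
  have "(f^^Suc n) w = x" using assms(2) n unfolding Bch_def by (simp add: funpow_Suc_app del: funpow.simps)
  then show ?thesis unfolding Pset_def using assms(2) B_A unfolding Bch_def by blast
qed

lemma Pset_Cyc: assumes "x \<in> Cyc" shows "Pset B f x = B"
  unfolding Pset_def using Cyc_reach[OF assms] B_A by auto

lemma iso_sim:
  assumes x1: "x1 \<in> B" "x1 \<notin> Cyc" and x2: "x2 \<in> B" "x2 \<notin> Cyc"
    and pi: "partial_iso (Pset B f x1) (Pset B f x2) f"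
  shows "(x1,x2) \<in> sim"
proof -
  define P1 where "P1 = Pset B f x1"
  define P2 where "P2 = Pset B f x2"
  obtain h where hb: "bij_betw h P1 P2" and
    hc: "\<forall>y\<in>P1. (f y \<in> P1 \<longleftrightarrow> f (h y) \<in> P2) \<and> (f y \<in> P1 \<longrightarrow> h (f y) = f (h y))"
    using pi unfolding partial_iso_def P1_def P2_def by blast
  have hP: "y \<in> P1 \<Longrightarrow> h y \<in> P2" for y using hb by (meson bij_betw_apply)
  have P1B: "P1 \<subseteq> B" and P2B: "P2 \<subseteq> B" unfolding P1_def P2_def using Pset_B by auto
  have x1P: "x1 \<in> P1" unfolding P1_def using Pset_self x1 by simp
  have hx1: "h x1 = x2"
  proof -
    have "f x1 \<notin> P1" unfolding P1_def using Pset_f_out x1 by simp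
    then have "f (h x1) \<notin> P2" using hc x1P by blast
    then show ?thesis using Pset_top hP[OF x1P] unfolding P2_def by blast
  qed
  have chb: "bij_betw h (Bch y) (Bch (h y))" if y: "y \<in> P1" for y
  proof -
    have sub: "Bch y \<subseteq> P1" using Pset_child y unfolding P1_def by blast
    have "inj_on h (Bch y)" using hb sub unfolding bij_betw_def by (meson inj_on_subset)
    moreover have "h ` Bch y = Bch (h y)"
    proof
      show "h ` Bch y \<subseteq> Bch (h y)"
      proof
        fix v assume "v \<in> h ` Bch y"
        then obtain w where w: "w \<in> Bch y" "v = h w" by auto
        then have wP: "w \<in> P1" and fw: "f w = y" using sub unfolding Bch_def by auto
        then have "h (f w) = f (h w)" using hc y by auto
        then show "v \<in> Bch (h y)" using w hP[OF wP] P2B fw unfolding Bch_def by auto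
      qed
      show "Bch (h y) \<subseteq> h ` Bch y"
      proof
        fix v assume v: "v \<in> Bch (h y)"
        have vP: "v \<in> P2" using Pset_child[OF _ v] hP[OF y] unfolding P2_def by blast
        then obtain w where w: "w \<in> P1" "v = h w" using hb unfolding bij_betw_def by auto
        have "f (h w) \<in> P2" using v w hP[OF y] unfolding Bch_def by auto
        then have "f w \<in> P1" "h (f w) = f (h w)" using hc w by auto
        then have "h (f w) = h y" using v w unfolding Bch_def by auto
        then have "f w = y" using hb \<open>f w \<in> P1\<close> y unfolding bij_betw_def inj_on_def by blast
        then have "w \<in> Bch y" using w P1B unfolding Bch_def by auto
        then show "v \<in> h ` Bch y" using w by auto
      qed
    qed
    ultimately show ?thesis unfolding bij_betw_def by blast
  qed
  define G where "G = sim \<union> {(y, h y) | y. y \<in> P1} \<union> {(h y, y) | y. y \<in> P1}"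
  define E where "E = trancl G"
  have GA: "G \<subseteq> A \<times> A" unfolding G_def using sim_sub P1B P2B hP B_A by blast
  have EA: "E \<subseteq> A \<times> A" unfolding E_def using GA by (metis trancl_subset_Sigma)
  have symG: "sym G" unfolding G_def sym_def using sim_sym by blast
  have symE: "sym E" unfolding E_def using symG by (rule sym_trancl)
  have simE: "sim \<subseteq> E" unfolding E_def G_def by (blast intro: r_into_trancl')
  have eqE: "equiv A E"
  proof -
    have "refl_on A E" unfolding refl_on_def using EA simE sim_refl by blast
    moreover have "trans E" unfolding E_def by (rule trans_trancl)
    ultimately show ?thesis unfolding equiv_def using symE EA by blast
  qed
  have inv: "(w,w') \<in> E \<Longrightarrow> (z,w) \<in> E \<longleftrightarrow> (z,w') \<in> E" for w w' z
    using eqE unfolding equiv_def sym_def trans_def by blast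
  have balh: "cnt2 (ch y \<inter> E``{z}) = cnt2 (ch (h y) \<inter> E``{z})" if y: "y \<in> P1" and z: "z \<in> A" for y z
  proof -
    have yB: "y \<in> B" "y \<notin> Cyc" using y P1B Pset_noncyc x1 unfolding P1_def by auto
    have hyB: "h y \<in> B" "h y \<notin> Cyc" using hP[OF y] P2B Pset_noncyc x2 unfolding P2_def by auto
    have "cnt2 (ch y \<inter> E``{z}) = cnt2 (Bch y \<inter> E``{z})"
      by (rule cnt2_union[OF sim_equiv eqE simE ch_A Bch_A]) (use profile_cnt[OF yB] in blast)
    also have "\<dots> = cnt2 (Bch (h y) \<inter> E``{z})"
    proof (rule cnt2_bij, rule bij_betw_Int[OF chb[OF y]], rule ballI)
      fix w assume "w \<in> Bch y"
      then have "w \<in> P1" using Pset_child y unfolding P1_def by blast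
      then have "(w, h w) \<in> E" unfolding E_def G_def by (blast intro: r_into_trancl')
      then show "w \<in> E``{z} \<longleftrightarrow> h w \<in> E``{z}" using inv by blast
    qed
    also have "\<dots> = cnt2 (ch (h y) \<inter> E``{z})"
      by (rule cnt2_union[OF sim_equiv eqE simE Bch_A ch_A]) (use profile_cnt[OF hyB] in metis)
    finally show ?thesis .
  qed
  have balG: "bal E x y" if xyG: "(x,y) \<in> G" for x y
  proof -
    consider "(x,y) \<in> sim" | "\<exists>u\<in>P1. x = u \<and> y = h u" | "\<exists>u\<in>P1. x = h u \<and> y = u"
      using xyG unfolding G_def by blast
    then show ?thesis
    proof cases
      case 1 then show ?thesis using bal_mono[OF sim_equiv eqE simE] sim_bal by blast
    next
      case 2 then show ?thesis using balh unfolding bal_def by blast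
    next
      case 3 then show ?thesis using balh unfolding bal_def by metis
    qed
  qed
  have "bal E x y" if xyE: "(x,y) \<in> E" for x y
  proof -
    have "(x,y) \<in> trancl G" using xyE E_def by simp
    then show ?thesis
    proof (induction rule: trancl_induct)
      case (base y) then show ?case using balG by blast
    next
      case (step y z) then show ?case using balG unfolding bal_def by simp
    qed
  qed
  then have "stable E" unfolding stable_def using eqE by blast
  moreover have "(x1, x2) \<in> E" using x1P hx1 unfolding E_def G_def by (blast intro: r_into_trancl')
  ultimately show ?thesis using stable_sim by blast
qed

lemma pi_pair:
  assumes "xi \<in> B" "xj \<in> B" "f xi = f xj" "xi \<noteq> xj"
    and pi: "partial_iso (Pset B f xi) (Pset B f xj) f"
  shows "xi \<notin> Cyc \<and> xj \<notin> Cyc \<and> (xi,xj) \<in> sim"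
proof -
  obtain h where hb: "bij_betw h (Pset B f xi) (Pset B f xj)" and
    hc: "\<forall>y\<in>Pset B f xi. (f y \<in> Pset B f xi \<longleftrightarrow> f (h y) \<in> Pset B f xj)"
    using pi unfolding partial_iso_def by blast
  have "\<not> (xi \<in> Cyc \<and> xj \<in> Cyc)" using cyc_pred_unique assms by blast
  moreover have "\<not> (xi \<in> Cyc \<and> xj \<notin> Cyc)"
  proof
    assume a: "xi \<in> Cyc \<and> xj \<notin> Cyc"
    then have PB: "Pset B f xi = B" using Pset_Cyc by simp
    have "xj \<in> Pset B f xj" using Pset_self assms by simp
    then obtain y where y: "y \<in> B" "xj = h y" using hb PB unfolding bij_betw_def by auto
    then have "f xj \<in> Pset B f xj" using hc PB B_closed by auto
    then show False using Pset_f_out assms a by blast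
  qed
  moreover have "\<not> (xi \<notin> Cyc \<and> xj \<in> Cyc)"
  proof
    assume a: "xi \<notin> Cyc \<and> xj \<in> Cyc"
    then have PB: "Pset B f xj = B" using Pset_Cyc by simp
    have xiP: "xi \<in> Pset B f xi" using Pset_self assms by simp
    then have "h xi \<in> B" using hb PB by (metis bij_betw_apply)
    then have "f (h xi) \<in> Pset B f xj" using PB B_closed by auto
    then have "f xi \<in> Pset B f xi" using hc xiP by blast
    then show False using Pset_f_out assms a by blast
  qed
  ultimately have "xi \<notin> Cyc" "xj \<notin> Cyc" by blast+
  then show ?thesis using iso_sim assms by blast
qed

lemma star_B: "star_cond B f"
  unfolding star_cond_def
proof (intro ballI impI)
  fix x1 x2 x3 assume x: "x1 \<in> B" "x2 \<in> B" "x3 \<in> B" and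
    h: "f x1 = f x2 \<and> f x2 = f x3 \<and> partial_iso (Pset B f x1) (Pset B f x2) f \<and>
     partial_iso (Pset B f x1) (Pset B f x3) f \<and> partial_iso (Pset B f x2) (Pset B f x3) f"
  show "card {x1, x2, x3} \<le> 2"
  proof (cases "x1 = x2 \<or> x1 = x3 \<or> x2 = x3")
    case True
    then show ?thesis by (auto simp: card_insert_if)
  next
    case False
    then have p12: "x1 \<notin> Cyc \<and> x2 \<notin> Cyc \<and> (x1,x2) \<in> sim" and p13: "x3 \<notin> Cyc \<and> (x1,x3) \<in> sim"
      using pi_pair x h by metis+
    let ?c = "f x1"
    have "x1 \<in> T ?c x1" using B_child_T x p12 by blast
    moreover have "x2 \<in> T ?c x1" using B_child_T[OF x(2)] p12 h T_cong[of x2 x1] sim_sym by metis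
    moreover have "x3 \<in> T ?c x1" using B_child_T[OF x(3)] p13 h T_cong[of x3 x1] sim_sym by metis
    ultimately have "{x1,x2,x3} \<subseteq> T ?c x1" by blast
    then have "card {x1,x2,x3} \<le> card (T ?c x1)" using T_fin card_mono by blast
    then show ?thesis using T_fin by (meson order_trans)
  qed
qed

end

lemma surj_exists:
  assumes "X \<noteq> {}" "Y \<noteq> {}" "finite Y" "card Y \<le> 2" "card Y = 2 \<longrightarrow> (\<exists>a\<in>X. \<exists>b\<in>X. a\<noteq>b)"
  shows "\<exists>g. g ` X = Y"
proof -
  have "card Y \<noteq> 0" using assms(2,3) by simp
  then have "card Y = 1 \<or> card Y = 2" using assms(4) by linarith
  then show ?thesis
  proof
    assume "card Y = 1"
    then obtain y where "Y = {y}" by (meson card_1_singletonE)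
    then show ?thesis using assms(1) by (intro exI[of _ "\<lambda>_. y"]) auto
  next
    assume c: "card Y = 2"
    then obtain y1 y2 where Y: "Y = {y1,y2}" "y1 \<noteq> y2" by (meson card_2_iff)
    obtain a b where ab: "a \<in> X" "b \<in> X" "a \<noteq> b" using assms(5) c by blast
    have "(\<lambda>x. if x = a then y1 else y2) ` X = Y" using ab Y by auto
    then show ?thesis by blast
  qed
qed

context MA begin

lemma B_iter: "x \<in> B \<Longrightarrow> (f^^n) x \<in> B"
  by (induction n) (auto simp: B_closed)

definition dB where "dB z = (LEAST k. (f^^k) z \<in> B)"

lemma dB_ex: assumes "z \<in> A" shows "\<exists>k. (f^^k) z \<in> B"
proof -
  obtain m n where mn: "(f^^m) z = (f^^n) x0" using conn[OF assms x0_A] by auto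
  have "(f^^n) x0 \<in> B" using B_iter[OF x0_B] .
  then show ?thesis using mn by (intro exI[of _ m]) simp
qed

lemma dB_in: "z \<in> A \<Longrightarrow> (f^^dB z) z \<in> B"
  unfolding dB_def using dB_ex by (rule LeastI_ex)

lemma dB_B: "z \<in> B \<Longrightarrow> dB z = 0"
  unfolding dB_def by (rule Least_eq_0) simp

lemma dB_step: assumes "z \<in> A" "z \<notin> B" shows "dB z = Suc (dB (f z))"
proof -
  have "dB z \<noteq> 0" using dB_in[OF assms(1)] assms(2) by (metis funpow_0)
  then obtain j where j: "dB z = Suc j" by (cases "dB z") auto
  have "(f^^j) (f z) \<in> B" using dB_in[OF assms(1)] j by (simp add: funpow_Suc_app del: funpow.simps)
  moreover have "\<not> (f^^i) (f z) \<in> B" if "i < j" for i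
  proof
    assume "(f^^i) (f z) \<in> B"
    then have "(f^^Suc i) z \<in> B" by (simp add: funpow_Suc_app del: funpow.simps)
    then have "dB z \<le> Suc i" unfolding dB_def by (rule Least_le)
    with that j show False by simp
  qed
  ultimately have "dB (f z) = j" unfolding dB_def by (intro Least_equality) (auto simp: not_less[symmetric])
  then show ?thesis using j by simp
qed

primrec Hrec :: "('a \<Rightarrow> 'a \<Rightarrow> 'a \<Rightarrow> 'a) \<Rightarrow> nat \<Rightarrow> 'a \<Rightarrow> 'a" where
  "Hrec cho 0 z = z"
| "Hrec cho (Suc k) z = cho (f z) (Hrec cho k (f z)) z"

definition hom_of where "hom_of cho z = Hrec cho (dB z) z"

lemma hom_of_B: "z \<in> B \<Longrightarrow> hom_of cho z = z"
  unfolding hom_of_def using dB_B by simp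

lemma hom_of_step: "z \<in> A \<Longrightarrow> z \<notin> B \<Longrightarrow> hom_of cho z = cho (f z) (hom_of cho (f z)) z"
  unfolding hom_of_def using dB_step by simp

definition vp where "vp a t \<longleftrightarrow> a \<in> A \<and> t \<in> B \<and> (a,t) \<in> sim \<and> (a = t \<or> (a \<notin> Cyc \<and> t \<notin> Cyc))"

definition spec_cho where
  "spec_cho cho \<longleftrightarrow> (\<forall>a t z. vp a t \<and> z \<in> A \<and> f z = a \<and> z \<notin> B \<longrightarrow> cho a t z \<in> T t z)"

lemma hom_of_vp_aux:
  assumes sc: "spec_cho cho"
  shows "\<forall>z. z \<in> A \<longrightarrow> dB z = n \<longrightarrow> vp z (hom_of cho z)"
proof (induction n)
  case 0
  show ?case
  proof (intro allI impI)
    fix z assume z: "z \<in> A" "dB z = 0"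
    then have "z \<in> B" using dB_in[OF z(1)] by simp
    then show "vp z (hom_of cho z)" unfolding vp_def using hom_of_B z sim_refl by simp
  qed
next
  case (Suc n)
  show ?case
  proof (intro allI impI)
    fix z assume z: "z \<in> A" "dB z = Suc n"
    then have zB: "z \<notin> B" using dB_B by auto
    then have dfz: "dB (f z) = n" using dB_step z by simp
    let ?t = "hom_of cho (f z)"
    have v: "vp (f z) ?t" using Suc dfz closed z by blast
    have w: "hom_of cho z = cho (f z) ?t z" using hom_of_step z zB by simp
    have inT: "hom_of cho z \<in> T ?t z" using sc v z zB w closed unfolding spec_cho_def by simp
    moreover have "?t \<in> B" using v unfolding vp_def by simp
    ultimately have "hom_of cho z \<in> B" "(hom_of cho z, z) \<in> sim" "hom_of cho z \<notin> Cyc"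
      using T_B[of ?t "hom_of cho z" z] T_props[OF inT] by auto
    moreover have "z \<notin> Cyc" using zB Cyc_B by blast
    ultimately show "vp z (hom_of cho z)" unfolding vp_def using z sim_sym by blast
  qed
qed

lemma hom_of_vp: "spec_cho cho \<Longrightarrow> z \<in> A \<Longrightarrow> vp z (hom_of cho z)"
  using hom_of_vp_aux by blast

lemma hom_of_T: assumes "spec_cho cho" "z \<in> A" "z \<notin> B"
  shows "hom_of cho z \<in> T (hom_of cho (f z)) z"
proof -
  have "vp (f z) (hom_of cho (f z))" using hom_of_vp[OF assms(1) closed[OF assms(2)]] .
  then have "cho (f z) (hom_of cho (f z)) z \<in> T (hom_of cho (f z)) z"
    using assms unfolding spec_cho_def by blast
  then show ?thesis using hom_of_step[OF assms(2,3)] by simp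
qed

lemma hom_of_hom: assumes "spec_cho cho" "z \<in> A"
  shows "hom_of cho (f z) = f (hom_of cho z)"
proof (cases "z \<in> B")
  case True then show ?thesis using hom_of_B B_closed by simp
next
  case False then show ?thesis using T_props[OF hom_of_T[OF assms False]] by simp
qed

lemma hom_of_mhom: assumes "spec_cho cho" shows "mhom A f B f (hom_of cho)"
proof -
  have "\<forall>x\<in>A. hom_of cho x \<in> B" using hom_of_vp[OF assms] unfolding vp_def by blast
  moreover have "\<forall>x\<in>A. hom_of cho (f x) = f (hom_of cho x)" using hom_of_hom[OF assms] by blast
  ultimately show ?thesis unfolding mhom_def by blast
qed

lemma hom_of_noncyc: assumes "spec_cho cho" "z \<in> A" "z \<notin> Cyc" shows "hom_of cho z \<notin> Cyc"
proof -
  have "vp z (hom_of cho z)" using hom_of_vp[OF assms(1,2)] .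
  then show ?thesis using assms(3) unfolding vp_def by auto
qed

definition cho_rho where "cho_rho a t z = (SOME g. g ` (ch a \<inter> sim``{z}) = T t z) z"

lemma g_exists:
  assumes v: "vp a t" and z: "z \<in> ch a" "z \<notin> Cyc"
  shows "\<exists>g. g ` (ch a \<inter> sim``{z}) = T t z"
proof -
  let ?X = "ch a \<inter> sim``{z}"
  have zA: "z \<in> A" using z unfolding ch_def by auto
  have zX: "z \<in> ?X" using z zA sim_refl by auto
  have key: "(S t z \<noteq> {}) \<and> ((\<exists>p\<in>S t z. \<exists>q\<in>S t z. p\<noteq>q) \<longrightarrow> (\<exists>p\<in>?X. \<exists>q\<in>?X. p\<noteq>q))"
  proof (cases "a = t")
    case True
    have "z \<in> S t z" using z zA sim_refl True unfolding S_def ch_def by auto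
    moreover have "S t z \<subseteq> ?X"
    proof
      fix w assume "w \<in> S t z"
      then have "w \<in> A" "f w = a" "(w,z) \<in> sim" using True unfolding S_def by auto
      then show "w \<in> ?X" using sim_sym unfolding ch_def by blast
    qed
    ultimately show ?thesis by blast
  next
    case False
    then have nc: "a \<notin> Cyc" "t \<notin> Cyc" using v unfolding vp_def by auto
    have "bal sim a t" using v sim_bal unfolding vp_def by blast
    then have "cnt2 ?X = cnt2 (ch t \<inter> sim``{z})" unfolding bal_def using zA by blast
    then have eq: "cnt2 ?X = cnt2 (S t z)" using profile_S[OF nc(2)] by simp
    show ?thesis using cnt2_eqD[OF eq] zX by blast
  qed
  have c: "cnt2 (T t z) = cnt2 (S t z)" by (rule cnt2_T)
  show ?thesis
  proof (rule surj_exists)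
    show "?X \<noteq> {}" using zX by blast
    have "S t z \<noteq> {}" using key by blast
    then show "T t z \<noteq> {}" using cnt2_eqD[OF c] by blast
    show "finite (T t z)" "card (T t z) \<le> 2" using T_fin by auto
    show "card (T t z) = 2 \<longrightarrow> (\<exists>p\<in>?X. \<exists>q\<in>?X. p\<noteq>q)"
    proof
      assume "card (T t z) = 2"
      then obtain p q where "T t z = {p,q}" "p \<noteq> q" by (meson card_2_iff)
      then have "\<exists>p\<in>T t z. \<exists>q\<in>T t z. p\<noteq>q" by blast
      then have "\<exists>p\<in>S t z. \<exists>q\<in>S t z. p\<noteq>q" using cnt2_eqD[OF c] by blast
      then show "\<exists>p\<in>?X. \<exists>q\<in>?X. p\<noteq>q" using key by blast
    qed
  qed
qed


end

context MA begin

lemma spec_rho: "spec_cho cho_rho"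
  unfolding spec_cho_def
proof (intro allI impI)
  fix a t z assume h: "vp a t \<and> z \<in> A \<and> f z = a \<and> z \<notin> B"
  then have zc: "z \<in> ch a" "z \<notin> Cyc" using Cyc_B unfolding ch_def by auto
  have zX: "z \<in> ch a \<inter> sim``{z}" using zc h sim_refl by auto
  have ex: "\<exists>g. g ` (ch a \<inter> sim``{z}) = T t z" using g_exists[of a t z] h zc by blast
  have "(SOME g. g ` (ch a \<inter> sim``{z}) = T t z) ` (ch a \<inter> sim``{z}) = T t z"
    using someI_ex[OF ex] .
  then show "cho_rho a t z \<in> T t z" unfolding cho_rho_def using zX by blast
qed

definition rho where "rho = hom_of cho_rho"

lemma rho_B: "z \<in> B \<Longrightarrow> rho z = z" unfolding rho_def by (rule hom_of_B)
lemma rho_vp: "z \<in> A \<Longrightarrow> vp z (rho z)" unfolding rho_def using hom_of_vp spec_rho by blast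
lemma rho_in: "z \<in> A \<Longrightarrow> rho z \<in> B" using rho_vp unfolding vp_def by blast
lemma rho_hom: "z \<in> A \<Longrightarrow> rho (f z) = f (rho z)" unfolding rho_def using hom_of_hom spec_rho by blast

lemma rho_surj:
  assumes a: "a \<in> A" and w: "w \<in> B" "f w = rho a"
  shows "\<exists>z\<in>A. f z = a \<and> rho z = w"
proof (cases "a \<in> B")
  case True
  have "rho w = w" using rho_B w(1) .
  moreover have "f w = a" using w rho_B[OF True] by simp
  moreover have "w \<in> A" using w B_A by blast
  ultimately show ?thesis by blast
next
  case False
  let ?t = "rho a"
  have v: "vp a ?t" using rho_vp a by blast
  have tB: "?t \<in> B" using v unfolding vp_def by simp
  then have "a \<noteq> ?t" using False by auto
  then have nc: "a \<notin> Cyc" "?t \<notin> Cyc" using v unfolding vp_def by auto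
  have wA: "w \<in> A" using w B_A by auto
  have wc: "w \<notin> Cyc" using noncyc_child[OF wA] w(2) nc(2) by simp
  have wT: "w \<in> T ?t w" using B_child_T[OF w(1) wc] w(2) by simp
  have "bal sim a ?t" using v sim_bal unfolding vp_def by blast
  then have ceq: "cnt2 (ch a \<inter> sim``{w}) = cnt2 (ch ?t \<inter> sim``{w})" unfolding bal_def using wA by blast
  have "w \<in> ch ?t \<inter> sim``{w}" using w wA sim_refl unfolding ch_def by auto
  then have "ch a \<inter> sim``{w} \<noteq> {}" using cnt2_eqD[OF ceq] by blast
  then obtain z' where z': "z' \<in> ch a" "(w,z') \<in> sim" by auto
  have z'c: "z' \<notin> Cyc" using ch_noncyc[OF z'(1) nc(1)] .
  have cls: "sim``{z'} = sim``{w}" using equiv_class_eq[OF sim_equiv z'(2)] by simp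
  have Teq: "T ?t z' = T ?t w" using T_cong[OF sim_sym[OF z'(2)]] .
  define G where "G = (SOME g. g ` (ch a \<inter> sim``{w}) = T ?t w)"
  have "\<exists>g. g ` (ch a \<inter> sim``{z'}) = T ?t z'" using g_exists[OF v z'(1) z'c] .
  then have "\<exists>g. g ` (ch a \<inter> sim``{w}) = T ?t w" unfolding cls Teq .
  then have G: "G ` (ch a \<inter> sim``{w}) = T ?t w" unfolding G_def by (rule someI_ex)
  then have "w \<in> G ` (ch a \<inter> sim``{w})" using wT by simp
  then obtain z where z: "z \<in> ch a" "(w,z) \<in> sim" "G z = w" by blast
  have zA: "z \<in> A" "f z = a" using z(1) unfolding ch_def by auto
  have zB: "z \<notin> B"
  proof
    assume "z \<in> B" then have "f z \<in> B" by (rule B_closed)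
    with zA False show False by simp
  qed
  have "rho z = cho_rho (f z) (rho (f z)) z" unfolding rho_def using hom_of_step[OF zA(1) zB] .
  also have "\<dots> = cho_rho a ?t z" using zA by simp
  also have "\<dots> = G z"
  proof -
    have e1: "sim``{z} = sim``{w}" using equiv_class_eq[OF sim_equiv z(2)] by simp
    have e2: "T ?t z = T ?t w" using T_cong[OF sim_sym[OF z(2)]] .
    show ?thesis unfolding cho_rho_def G_def e1 e2 ..
  qed
  finally show ?thesis using zA z by blast
qed

end

context MA begin

definition Ifam where "Ifam = {\<phi>. \<exists>cho. spec_cho cho \<and> \<phi> = hom_of cho}"

lemma rho_Ifam: "rho \<in> Ifam" unfolding Ifam_def rho_def using spec_rho by blast

lemma Ifam_mhom: "\<phi> \<in> Ifam \<Longrightarrow> mhom A f B f \<phi>"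
  unfolding Ifam_def using hom_of_mhom by blast

lemma Ifam_B: "\<phi> \<in> Ifam \<Longrightarrow> z \<in> B \<Longrightarrow> \<phi> z = z"
  unfolding Ifam_def using hom_of_B by blast

lemma Ifam_noncyc: "\<phi> \<in> Ifam \<Longrightarrow> z \<in> A \<Longrightarrow> z \<notin> Cyc \<Longrightarrow> \<phi> z \<notin> Cyc"
  unfolding Ifam_def using hom_of_noncyc by blast

lemma Ifam_in: "\<phi> \<in> Ifam \<Longrightarrow> z \<in> A \<Longrightarrow> \<phi> z \<in> B"
  using Ifam_mhom unfolding mhom_def by blast

lemma Ifam_hom: "\<phi> \<in> Ifam \<Longrightarrow> z \<in> A \<Longrightarrow> \<phi> (f z) = f (\<phi> z)"
  using Ifam_mhom unfolding mhom_def by blast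

lemma Ifam_iter: assumes "\<phi> \<in> Ifam" "z \<in> A" shows "\<phi> ((f^^k) z) = (f^^k) (\<phi> z)"
proof (induction k)
  case 0 then show ?case by simp
next
  case (Suc k)
  have "\<phi> ((f^^Suc k) z) = \<phi> (f ((f^^k) z))" by simp
  also have "\<dots> = f (\<phi> ((f^^k) z))" using Ifam_hom[OF assms(1) iter_closed[OF assms(2)]] .
  finally show ?case using Suc by simp
qed

lemma sib_sep_aux:
  assumes u: "u1 \<in> A" "u2 \<in> A" "u1 \<noteq> u2" "f u1 = f u2" "u1 \<notin> B" "u1 \<notin> Cyc" "u2 \<notin> Cyc"
    and s: "(u1,u2) \<in> sim"
  shows "\<exists>\<phi>\<in>Ifam. \<phi> u1 \<noteq> \<phi> u2"
proof -
  define c where "c = f u1"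
  define t where "t = rho c"
  have cA: "c \<in> A" using closed u unfolding c_def by simp
  have v: "vp c t" using rho_vp cA unfolding t_def by simp
  have tB: "t \<in> B" using v unfolding vp_def by simp
  have two: "\<exists>p\<in>S t u1. \<exists>q\<in>S t u1. p \<noteq> q"
  proof (cases "c \<in> B")
    case True
    then have "t = c" unfolding t_def using rho_B by simp
    then have "u1 \<in> S t u1" "u2 \<in> S t u1" unfolding S_def c_def using u s sim_refl sim_sym by auto
    then show ?thesis using u by blast
  next
    case False
    then have "c \<noteq> t" using tB by auto
    then have nc: "c \<notin> Cyc" "t \<notin> Cyc" using v unfolding vp_def by auto
    have "bal sim c t" using v sim_bal unfolding vp_def by blast
    then have ceq: "cnt2 (ch c \<inter> sim``{u1}) = cnt2 (ch t \<inter> sim``{u1})" unfolding bal_def using u by blast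
    have "u1 \<in> ch c \<inter> sim``{u1}" "u2 \<in> ch c \<inter> sim``{u1}"
      unfolding ch_def c_def using u s sim_refl by auto
    then have "\<exists>p\<in>ch t \<inter> sim``{u1}. \<exists>q\<in>ch t \<inter> sim``{u1}. p \<noteq> q" using cnt2_eqD[OF ceq] u(3) by blast
    then show ?thesis using profile_S[OF nc(2)] by simp
  qed
  have "\<exists>p\<in>T t u1. \<exists>q\<in>T t u1. p \<noteq> q" using two cnt2_eqD[OF cnt2_T] by blast
  then obtain r where r: "r \<in> T t u1" "r \<noteq> rho u2" by blast
  define cho' where "cho' = (\<lambda>a t' z. if a = c \<and> t' = t \<and> z = u1 then r else cho_rho a t' z)"
  have sc: "spec_cho cho'"
    unfolding spec_cho_def
  proof (intro allI impI)
    fix a t' z assume h: "vp a t' \<and> z \<in> A \<and> f z = a \<and> z \<notin> B"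
    show "cho' a t' z \<in> T t' z"
    proof (cases "a = c \<and> t' = t \<and> z = u1")
      case True then show ?thesis unfolding cho'_def using r by simp
    next
      case False
      then have "cho' a t' z = cho_rho a t' z" unfolding cho'_def by (rule if_not_P)
      moreover have "cho_rho a t' z \<in> T t' z" using spec_rho h unfolding spec_cho_def by blast
      ultimately show ?thesis by simp
    qed
  qed
  have agree: "\<forall>z. z \<in> A \<longrightarrow> dB z = n \<longrightarrow> (\<forall>k. (f^^k) z \<noteq> u1) \<longrightarrow> hom_of cho' z = rho z" for n
  proof (induction n)
    case 0
    show ?case
    proof (intro allI impI)
      fix z assume z: "z \<in> A" "dB z = 0"
      then have "z \<in> B" using dB_in[OF z(1)] by simp
      then show "hom_of cho' z = rho z" using hom_of_B rho_B by simp
    qed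
  next
    case (Suc n)
    show ?case
    proof (intro allI impI)
      fix z assume z: "z \<in> A" "dB z = Suc n" and nk: "\<forall>k. (f^^k) z \<noteq> u1"
      then have zB: "z \<notin> B" using dB_B by auto
      then have dfz: "dB (f z) = n" using dB_step z by simp
      have nk': "\<forall>k. (f^^k) (f z) \<noteq> u1"
      proof
        fix k show "(f^^k) (f z) \<noteq> u1" using nk[rule_format, of "Suc k"] by (simp add: funpow_Suc_app del: funpow.simps)
      qed
      have ih: "hom_of cho' (f z) = rho (f z)" using Suc closed[OF z(1)] dfz nk' by blast
      have zu: "z \<noteq> u1" using nk[rule_format, of 0] by simp
      have "hom_of cho' z = cho' (f z) (hom_of cho' (f z)) z" using hom_of_step[OF z(1) zB] .
      also have "\<dots> = cho' (f z) (rho (f z)) z" using ih by simp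
      also have "\<dots> = cho_rho (f z) (rho (f z)) z" unfolding cho'_def using zu by simp
      also have "\<dots> = rho z" unfolding rho_def using hom_of_step[OF z(1) zB] by simp
      finally show "hom_of cho' z = rho z" .
    qed
  qed
  have agree': "z \<in> A \<Longrightarrow> (\<forall>k. (f^^k) z \<noteq> u1) \<Longrightarrow> hom_of cho' z = rho z" for z
    using agree by blast
  have nc1: "\<forall>k. (f^^k) c \<noteq> u1"
  proof
    fix k show "(f^^k) c \<noteq> u1"
    proof
      assume "(f^^k) c = u1"
      then have "(f^^Suc k) u1 = u1" unfolding c_def by (simp add: funpow_Suc_app del: funpow.simps)
      then have "u1 \<in> Cyc" unfolding Cyc_def using u(1) by blast
      with u(6) show False by simp
    qed
  qed
  have hc: "hom_of cho' c = t" using agree'[OF cA nc1] unfolding t_def .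
  have h1: "hom_of cho' u1 = r"
  proof -
    have "hom_of cho' u1 = cho' (f u1) (hom_of cho' (f u1)) u1" using hom_of_step[OF u(1) u(5)] .
    also have "\<dots> = cho' c t u1" using hc unfolding c_def by simp
    finally show ?thesis unfolding cho'_def by simp
  qed
  have nc2: "\<forall>k. (f^^k) u2 \<noteq> u1"
  proof
    fix k show "(f^^k) u2 \<noteq> u1"
    proof (cases k)
      case 0 then show ?thesis using u(3) by simp
    next
      case (Suc j)
      have "(f^^k) u2 = (f^^j) c" unfolding Suc c_def using u(4) by (simp add: funpow_Suc_app del: funpow.simps)
      then show ?thesis using nc1 by simp
    qed
  qed
  have h2: "hom_of cho' u2 = rho u2" using agree'[OF u(2) nc2] .
  have "hom_of cho' \<in> Ifam" unfolding Ifam_def using sc by blast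
  moreover have "hom_of cho' u1 \<noteq> hom_of cho' u2" using h1 h2 r by simp
  ultimately show ?thesis by blast
qed

lemma rho_cyc_back: "z \<in> A \<Longrightarrow> rho z \<in> Cyc \<Longrightarrow> z \<in> Cyc"
  using Ifam_noncyc[OF rho_Ifam] by blast

lemma sib_sep:
  assumes u: "u1 \<in> A" "u2 \<in> A" "u1 \<noteq> u2" "f u1 = f u2"
  shows "\<exists>\<phi>\<in>Ifam. \<phi> u1 \<noteq> \<phi> u2"
proof (cases "rho u1 = rho u2")
  case False then show ?thesis using rho_Ifam by blast
next
  case True
  have s1: "(u1, rho u1) \<in> sim" using rho_vp[OF u(1)] unfolding vp_def by blast
  have s2: "(u2, rho u2) \<in> sim" using rho_vp[OF u(2)] unfolding vp_def by blast
  have s: "(u1,u2) \<in> sim" using sim_trans[OF s1] sim_sym[OF s2] True by simp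
  have nc1: "u1 \<notin> Cyc"
  proof
    assume a: "u1 \<in> Cyc"
    then have "rho u1 = u1" using rho_B Cyc_B by blast
    then have "rho u2 \<in> Cyc" using True a by simp
    then have "u2 \<in> Cyc" using rho_cyc_back u(2) by blast
    then show False using cyc_pred_unique a u by blast
  qed
  have nc2: "u2 \<notin> Cyc"
  proof
    assume a: "u2 \<in> Cyc"
    then have "rho u2 = u2" using rho_B Cyc_B by blast
    then have "rho u1 \<in> Cyc" using True a by simp
    then have "u1 \<in> Cyc" using rho_cyc_back u(1) by blast
    then show False using cyc_pred_unique a u by blast
  qed
  have "\<not> (u1 \<in> B \<and> u2 \<in> B)" using True rho_B u(3) by auto
  then consider "u1 \<notin> B" | "u2 \<notin> B" by blast
  then show ?thesis
  proof cases
    case 1 then show ?thesis using sib_sep_aux[OF u 1 nc1 nc2 s] by blast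
  next
    case 2
    have "\<exists>\<phi>\<in>Ifam. \<phi> u2 \<noteq> \<phi> u1"
      using sib_sep_aux[OF u(2) u(1) u(3)[symmetric] u(4)[symmetric] 2 nc2 nc1 sim_sym[OF s]] .
    then show ?thesis by metis
  qed
qed

lemma meet_aux:
  assumes a: "a1 \<in> A" "a2 \<in> A" and mn: "(f^^m) a1 = (f^^n) a2" "m < n" and r: "rho a1 = rho a2"
  shows "(f^^m) a1 = (f^^m) a2"
proof -
  define z where "z = rho a1"
  have zA: "z \<in> A" using rho_in[OF a(1)] B_A unfolding z_def by blast
  have "(f^^m) z = rho ((f^^m) a1)" unfolding z_def using Ifam_iter[OF rho_Ifam a(1)] by simp
  also have "\<dots> = rho ((f^^n) a2)" using mn by simp
  also have "\<dots> = (f^^n) z" unfolding z_def using Ifam_iter[OF rho_Ifam a(2)] r by simp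
  finally have "(f^^m) z \<in> Cyc" using eq_iter_Cyc[OF zA mn(2)] by simp
  have e1: "rho ((f^^m) a1) = (f^^m) z" unfolding z_def using Ifam_iter[OF rho_Ifam a(1)] by simp
  have e2: "rho ((f^^m) a2) = (f^^m) z" unfolding z_def using Ifam_iter[OF rho_Ifam a(2)] r by simp
  have c1: "(f^^m) a1 \<in> Cyc" using rho_cyc_back[OF iter_closed[OF a(1)]] e1 \<open>(f^^m) z \<in> Cyc\<close> by simp
  have c2: "(f^^m) a2 \<in> Cyc" using rho_cyc_back[OF iter_closed[OF a(2)]] e2 \<open>(f^^m) z \<in> Cyc\<close> by simp
  have "(f^^m) a1 = (f^^m) z" using e1 rho_B[OF Cyc_B[OF c1]] by simp
  moreover have "(f^^m) a2 = (f^^m) z" using e2 rho_B[OF Cyc_B[OF c2]] by simp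
  ultimately show ?thesis by simp
qed

lemma Ifam_sep:
  assumes a: "a1 \<in> A" "a2 \<in> A" and h: "\<forall>\<phi>\<in>Ifam. \<phi> a1 = \<phi> a2"
  shows "a1 = a2"
proof -
  have r: "rho a1 = rho a2" using h rho_Ifam by blast
  have ex: "\<exists>k. (f^^k) a1 = (f^^k) a2"
  proof -
    obtain m n where mn: "(f^^m) a1 = (f^^n) a2" using conn[OF a] by blast
    consider "m = n" | "m < n" | "n < m" by linarith
    then show ?thesis
    proof cases
      case 1 then show ?thesis using mn by blast
    next
      case 2 then show ?thesis using meet_aux[OF a mn 2 r] by blast
    next
      case 3 then show ?thesis using meet_aux[OF a(2) a(1) mn[symmetric] 3 r[symmetric]] by metis
    qed
  qed
  define j where "j = (LEAST k. (f^^k) a1 = (f^^k) a2)"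
  have j: "(f^^j) a1 = (f^^j) a2" unfolding j_def using ex by (rule LeastI_ex)
  show ?thesis
  proof (cases j)
    case 0 then show ?thesis using j by simp
  next
    case (Suc i)
    have "(f^^i) a1 \<noteq> (f^^i) a2"
    proof
      assume "(f^^i) a1 = (f^^i) a2"
      then have "j \<le> i" unfolding j_def by (rule Least_le)
      with Suc show False by simp
    qed
    moreover have "f ((f^^i) a1) = f ((f^^i) a2)" using j Suc by simp
    ultimately obtain \<phi> where \<phi>: "\<phi> \<in> Ifam" "\<phi> ((f^^i) a1) \<noteq> \<phi> ((f^^i) a2)"
      using sib_sep[OF iter_closed[OF a(1)] iter_closed[OF a(2)]] by blast
    have "\<phi> ((f^^i) a1) = (f^^i) (\<phi> a1)" using Ifam_iter[OF \<phi>(1) a(1)] .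
    also have "\<dots> = (f^^i) (\<phi> a2)" using bspec[OF h \<phi>(1)] by simp
    also have "\<dots> = \<phi> ((f^^i) a2)" using Ifam_iter[OF \<phi>(1) a(2)] by simp
    finally show ?thesis using \<phi>(2) by simp
  qed
qed

end

context MA begin

definition e where "e a = restrict (\<lambda>\<phi>. \<phi> a) Ifam"
definition PP where "PP = PiE Ifam (\<lambda>_. B)"
definition FF where "FF = pow_fun Ifam f"

lemma e_in: "a \<in> A \<Longrightarrow> e a \<in> PP"
  unfolding e_def PP_def using Ifam_in by auto

lemma e_app: "\<phi> \<in> Ifam \<Longrightarrow> e a \<phi> = \<phi> a" unfolding e_def by simp

lemma FF_app: "\<phi> \<in> Ifam \<Longrightarrow> FF \<psi> \<phi> = f (\<psi> \<phi>)" unfolding FF_def pow_fun_def by simp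

lemma e_hom: assumes "a \<in> A" shows "e (f a) = FF (e a)"
proof
  fix \<phi> show "e (f a) \<phi> = FF (e a) \<phi>"
  proof (cases "\<phi> \<in> Ifam")
    case True then show ?thesis using e_app FF_app Ifam_hom assms by simp
  next
    case False then show ?thesis unfolding e_def FF_def pow_fun_def by simp
  qed
qed

lemma e_inj: "inj_on e A"
proof (rule inj_onI)
  fix a1 a2 assume a: "a1 \<in> A" "a2 \<in> A" "e a1 = e a2"
  have "\<forall>\<phi>\<in>Ifam. \<phi> a1 = \<phi> a2"
  proof
    fix \<phi> assume "\<phi> \<in> Ifam"
    then show "\<phi> a1 = \<phi> a2" using e_app[of \<phi>] a(3) by metis
  qed
  then show "a1 = a2" using Ifam_sep a(1,2) by blast
qed

lemma FF_P: assumes "\<psi> \<in> PP" shows "FF \<psi> \<in> PP"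
  using assms unfolding PP_def FF_def pow_fun_def using B_closed by auto

lemma P_rho: "\<psi> \<in> PP \<Longrightarrow> \<psi> rho \<in> B"
  unfolding PP_def using rho_Ifam by auto

lemma FF_rho: "FF \<psi> rho = f (\<psi> rho)" using FF_app rho_Ifam by blast

lemma FF_iter_P: "\<psi> \<in> PP \<Longrightarrow> (FF^^k) \<psi> \<in> PP"
  by (induction k) (auto simp: FF_P)

lemma FF_iter_e: "a \<in> A \<Longrightarrow> (FF^^k) (e a) = e ((f^^k) a)"
proof (induction k)
  case 0 then show ?case by simp
next
  case (Suc k)
  then show ?case using e_hom[OF iter_closed[OF Suc.prems]] by simp
qed

definition EE where "EE = {\<psi>\<in>PP. \<exists>k. (FF^^k) \<psi> \<in> e ` (A - B)}"
definition kE where "kE \<psi> = (LEAST k. (FF^^k) \<psi> \<in> e ` (A - B))"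

primrec L :: "nat \<Rightarrow> (('a \<Rightarrow> 'a) \<Rightarrow> 'a) \<Rightarrow> 'a" where
  "L 0 \<psi> = inv_into A e \<psi>"
| "L (Suc k) \<psi> = (SOME a. a \<in> A \<and> f a = L k (FF \<psi>) \<and> rho a = \<psi> rho)"

definition R where "R \<psi> = (if \<psi> \<in> EE then L (kE \<psi>) \<psi> else \<psi> rho)"

lemma L_inv: "\<forall>\<psi>. \<psi> \<in> PP \<longrightarrow> (FF^^k) \<psi> \<in> e ` (A - B) \<longrightarrow> L k \<psi> \<in> A \<and> rho (L k \<psi>) = \<psi> rho"
proof (induction k)
  case 0
  show ?case
  proof (intro allI impI)
    fix \<psi> assume "\<psi> \<in> PP" "(FF^^0) \<psi> \<in> e ` (A - B)"
    then obtain a where a: "a \<in> A" "\<psi> = e a" by auto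
    have "L 0 \<psi> = a" using inv_into_f_f[OF e_inj a(1)] a by simp
    then show "L 0 \<psi> \<in> A \<and> rho (L 0 \<psi>) = \<psi> rho" using a e_app[OF rho_Ifam] by simp
  qed
next
  case (Suc k)
  show ?case
  proof (intro allI impI)
    fix \<psi> assume p: "\<psi> \<in> PP" "(FF^^Suc k) \<psi> \<in> e ` (A - B)"
    have "(FF^^k) (FF \<psi>) \<in> e ` (A - B)" using p(2) by (simp add: funpow_Suc_app del: funpow.simps)
    then have a0: "L k (FF \<psi>) \<in> A" "rho (L k (FF \<psi>)) = FF \<psi> rho" using Suc FF_P[OF p(1)] by blast+
    then have "rho (L k (FF \<psi>)) = f (\<psi> rho)" using FF_rho by simp
    then obtain z where "z \<in> A" "f z = L k (FF \<psi>)" "rho z = \<psi> rho"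
      using rho_surj[OF a0(1) P_rho[OF p(1)]] by metis
    then have ex: "\<exists>a. a \<in> A \<and> f a = L k (FF \<psi>) \<and> rho a = \<psi> rho" by blast
    have "L (Suc k) \<psi> \<in> A \<and> f (L (Suc k) \<psi>) = L k (FF \<psi>) \<and> rho (L (Suc k) \<psi>) = \<psi> rho"
      unfolding L.simps by (rule someI_ex[OF ex])
    then show "L (Suc k) \<psi> \<in> A \<and> rho (L (Suc k) \<psi>) = \<psi> rho" by blast
  qed
qed

lemma L_Suc: assumes "\<psi> \<in> PP" "(FF^^Suc k) \<psi> \<in> e ` (A - B)"
  shows "f (L (Suc k) \<psi>) = L k (FF \<psi>)"
proof -
  have "(FF^^k) (FF \<psi>) \<in> e ` (A - B)" using assms(2) by (simp add: funpow_Suc_app del: funpow.simps)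
  then have a0: "L k (FF \<psi>) \<in> A" "rho (L k (FF \<psi>)) = FF \<psi> rho" using L_inv FF_P[OF assms(1)] by blast+
  then have "rho (L k (FF \<psi>)) = f (\<psi> rho)" using FF_rho by simp
  then obtain z where "z \<in> A" "f z = L k (FF \<psi>)" "rho z = \<psi> rho"
    using rho_surj[OF a0(1) P_rho[OF assms(1)]] by metis
  then have ex: "\<exists>a. a \<in> A \<and> f a = L k (FF \<psi>) \<and> rho a = \<psi> rho" by blast
  have "L (Suc k) \<psi> \<in> A \<and> f (L (Suc k) \<psi>) = L k (FF \<psi>) \<and> rho (L (Suc k) \<psi>) = \<psi> rho"
    unfolding L.simps by (rule someI_ex[OF ex])
  then show ?thesis by blast
qed

lemma kE_in: assumes "\<psi> \<in> EE" shows "(FF^^kE \<psi>) \<psi> \<in> e ` (A - B)"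
proof -
  have "\<exists>k. (FF^^k) \<psi> \<in> e ` (A - B)" using assms unfolding EE_def by blast
  then show ?thesis unfolding kE_def by (rule LeastI_ex)
qed

lemma R_in: assumes "\<psi> \<in> PP" shows "R \<psi> \<in> A"
proof (cases "\<psi> \<in> EE")
  case True then show ?thesis unfolding R_def using L_inv kE_in assms by simp
next
  case False then show ?thesis unfolding R_def using P_rho[OF assms] B_A by auto
qed

lemma eB_not_EE: assumes "a \<in> B" shows "e a \<notin> EE"
proof
  assume "e a \<in> EE"
  then obtain k b where kb: "(FF^^k) (e a) = e b" "b \<in> A" "b \<notin> B" unfolding EE_def by blast
  have aA: "a \<in> A" using assms B_A by blast
  then have "e ((f^^k) a) = e b" using kb FF_iter_e by simp
  then have "(f^^k) a = b" using e_inj iter_closed[OF aA] kb(2) unfolding inj_on_def by blast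
  then show False using B_iter[OF assms, of k] kb(3) by simp
qed

lemma R_e: assumes "a \<in> A" shows "R (e a) = a"
proof (cases "a \<in> B")
  case True
  then show ?thesis unfolding R_def using eB_not_EE e_app[OF rho_Ifam] rho_B by simp
next
  case False
  have ea: "e a \<in> e ` (A - B)" using assms False by blast
  then have "e a \<in> EE" unfolding EE_def using e_in[OF assms] by (auto intro: exI[of _ 0])
  moreover have "kE (e a) = 0" unfolding kE_def using ea by (intro Least_eq_0) simp
  ultimately show ?thesis unfolding R_def using inv_into_f_f[OF e_inj assms] by simp
qed

lemma R_hom: assumes p: "\<psi> \<in> PP" shows "R (FF \<psi>) = f (R \<psi>)"
proof (cases "\<psi> \<in> EE")
  case False
  have "FF \<psi> \<notin> EE"
  proof
    assume "FF \<psi> \<in> EE"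
    then obtain k where "(FF^^k) (FF \<psi>) \<in> e ` (A - B)" unfolding EE_def by blast
    then have "(FF^^Suc k) \<psi> \<in> e ` (A - B)" by (simp add: funpow_Suc_app del: funpow.simps)
    then have "\<psi> \<in> EE" unfolding EE_def using p by blast
    with False show False by simp
  qed
  then show ?thesis unfolding R_def using False FF_rho by simp
next
  case True
  show ?thesis
  proof (cases "kE \<psi>")
    case 0
    then have "\<psi> \<in> e ` (A - B)" using kE_in[OF True] by simp
    then obtain a where a: "a \<in> A" "a \<notin> B" "\<psi> = e a" by blast
    have Ra: "R \<psi> = a" using R_e a by simp
    have "FF \<psi> = e (f a)" using e_hom a by simp
    then have "R (FF \<psi>) = f a" using R_e closed[OF a(1)] by simp
    then show ?thesis using Ra by simp
  next
    case (Suc k)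
    have s: "(FF^^Suc k) \<psi> \<in> e ` (A - B)" using kE_in[OF True] Suc by simp
    then have s': "(FF^^k) (FF \<psi>) \<in> e ` (A - B)" by (simp add: funpow_Suc_app del: funpow.simps)
    have FE: "FF \<psi> \<in> EE" unfolding EE_def using s' FF_P[OF p] by blast
    have "kE (FF \<psi>) = k"
      unfolding kE_def
    proof (rule Least_equality)
      show "(FF^^k) (FF \<psi>) \<in> e ` (A - B)" using s' .
      fix j assume j: "(FF^^j) (FF \<psi>) \<in> e ` (A - B)"
      then have "(FF^^Suc j) \<psi> \<in> e ` (A - B)" by (simp add: funpow_Suc_app del: funpow.simps)
      then have "kE \<psi> \<le> Suc j" unfolding kE_def by (rule Least_le)
      then show "k \<le> j" using Suc by simp
    qed
    then have "R (FF \<psi>) = L k (FF \<psi>)" unfolding R_def using FE by simp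
    moreover have "R \<psi> = L (Suc k) \<psi>" unfolding R_def using True Suc by simp
    ultimately show ?thesis using L_Suc[OF p s] by simp
  qed
qed

lemma A_in_VB: "in_V B f A f"
proof -
  let ?M = "e ` A"
  let ?h = "\<lambda>\<psi>. e (R \<psi>)"
  have ret: "is_retract PP FF ?M"
    unfolding is_retract_def
  proof (intro conjI)
    show "?M \<noteq> {}" using ne by simp
    show "?M \<subseteq> PP" using e_in by blast
    show "\<forall>x\<in>?M. FF x \<in> ?M"
    proof
      fix x assume "x \<in> ?M"
      then obtain a where a: "a \<in> A" "x = e a" by blast
      then have "FF x = e (f a)" using e_hom by simp
      then show "FF x \<in> ?M" using closed[OF a(1)] by blast
    qed
    have "mhom PP FF ?M FF ?h" unfolding mhom_def using R_in R_hom e_hom by simp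
    moreover have "\<forall>x\<in>?M. ?h x = x" using R_e by auto
    ultimately show "\<exists>h. mhom PP FF ?M FF h \<and> (\<forall>x\<in>?M. h x = x)" by blast
  qed
  have iso: "miso A f ?M FF e"
    unfolding miso_def mhom_def using e_hom e_inj by (auto simp: bij_betw_def)
  have "in_R PP FF A f" unfolding in_R_def using ret iso by blast
  then show ?thesis unfolding in_V_def PP_def FF_def by blast
qed

lemma B_in_VA: "in_V A f B f"
proof -
  let ?I = "{id :: 'a \<Rightarrow> 'a}"
  let ?P = "PiE ?I (\<lambda>_. A)"
  let ?F = "pow_fun ?I f"
  let ?c = "\<lambda>b. restrict (\<lambda>_. b) ?I"
  let ?M = "?c ` B"
  have Fc: "?F (?c b) = ?c (f b)" for b unfolding pow_fun_def by auto
  have ret: "is_retract ?P ?F ?M"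
    unfolding is_retract_def
  proof (intro conjI)
    show "?M \<noteq> {}" using B_ne by simp
    show "?M \<subseteq> ?P"
    proof
      fix x assume "x \<in> ?M"
      then obtain b where b: "b \<in> B" "x = ?c b" by blast
      have "?c b \<in> ?P" unfolding restrict_PiE_iff using b B_A by blast
      then show "x \<in> ?P" using b by simp
    qed
    show "\<forall>x\<in>?M. ?F x \<in> ?M" using Fc B_closed by auto
    let ?h = "\<lambda>\<psi>. ?c (rho (\<psi> id))"
    have "\<forall>\<psi>\<in>?P. ?h \<psi> \<in> ?M" using rho_in by auto
    moreover have "\<forall>\<psi>\<in>?P. ?h (?F \<psi>) = ?F (?h \<psi>)"
    proof
      fix \<psi> assume "\<psi> \<in> ?P"
      then have "\<psi> id \<in> A" by auto
      moreover have "?F \<psi> id = f (\<psi> id)" unfolding pow_fun_def by simp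
      ultimately show "?h (?F \<psi>) = ?F (?h \<psi>)" using rho_hom Fc by simp
    qed
    ultimately have "mhom ?P ?F ?M ?F ?h" unfolding mhom_def by blast
    moreover have "\<forall>x\<in>?M. ?h x = x" using rho_B by auto
    ultimately show "\<exists>h. mhom ?P ?F ?M ?F h \<and> (\<forall>x\<in>?M. h x = x)" by blast
  qed
  have inj: "inj_on ?c B"
  proof (rule inj_onI)
    fix x y assume "?c x = ?c y"
    then have "?c x id = ?c y id" by simp
    then show "x = y" by simp
  qed
  have iso: "miso B f ?M ?F ?c"
    unfolding miso_def mhom_def bij_betw_def using inj Fc by auto
  have "in_R ?P ?F B f" unfolding in_R_def using ret iso by blast
  then show ?thesis unfolding in_V_def by blast
qed

lemma B_in_R: "in_R A f B f"
proof -
  have "is_retract A f B"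
    unfolding is_retract_def using B_ne B_A B_closed rho_in rho_hom rho_B unfolding mhom_def by blast
  moreover have "miso B f B f id" unfolding miso_def mhom_def by auto
  ultimately show ?thesis unfolding in_R_def by blast
qed

lemma B_Ustar: "in_Ustar_c B f"
proof -
  have "mono_alg B f" unfolding mono_alg_def using B_ne B_closed by blast
  moreover have "connected_alg B f" unfolding connected_alg_def using conn B_A by blast
  ultimately show ?thesis unfolding in_Ustar_c_def using star_B by blast
qed

end

theorem lemma4p4:
  fixes A :: "'a set" and f :: "'a \<Rightarrow> 'a"
  assumes "mono_alg A f" and "connected_alg A f"
  shows "\<exists>(B :: 'a set) g. in_R A f B g \<and> in_Ustar_c B g \<and> same_V A f B g"
proof -
  interpret MA A f
    using assms unfolding mono_alg_def connected_alg_def by unfold_locales auto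
  have "in_R A f B f \<and> in_Ustar_c B f \<and> same_V A f B f"
    using B_in_R B_Ustar A_in_VB B_in_VA unfolding same_V_def by blast
  then show ?thesis by blast
qed


end
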